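(* Let $\Sigma$ be a mirror curve of a toric Calabi-Yau threefold, written in the form $1+x+y+\sum_{i=1}^k r_i x^{m_i}y^{n_i}=0$ in $(\mathbb{C}^* )^2$ for some integers $m_i,n_i$ and parameters $r_i$, and for an integer $f$ let $\Sigma_f$ be the framed curve $1+XY^{-f}+Y+\sum_{i=1}^k r_i (XY^{-f})^{m_i}Y^{n_i}=0$ in $(\mathbb{C}^* )^2$. Then there are at most finitely many values of $f$ for which the map $X:\Sigma_f\to\mathbb{C}^*$ fails to be a branched covering; i.e. for generic framing $f$, $X:\Sigma_f\to\mathbb{C}^*$ is a branched covering. *)

theory Defs
  imports "HOL-Analysis.Analysis"
begin

text \<open>Branched covering (topological version, as for maps between Riemann surfaces):
  a continuous, surjective, proper map with finite fibres which is an (unbranched)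
  covering map away from a discrete, closed branch locus D in the base.\<close>
definition branched_covering ::
  "('a::topological_space) set \<Rightarrow> ('a \<Rightarrow> 'b::topological_space) \<Rightarrow> 'b set \<Rightarrow> bool" where
  "branched_covering S p T \<longleftrightarrow>
     continuous_on S p \<and> p ` S = T \<and>
     (\<forall>K. K \<subseteq> T \<and> compact K \<longrightarrow> compact {z\<in>S. p z \<in> K}) \<and>
     (\<forall>t\<in>T. finite {z\<in>S. p z = t}) \<and>
     (\<exists>D. D \<subseteq> T \<and> D sparse_in T \<and> covering_space (S - p -` D) p (T - D))"

definition mirror_exponents :: "nat \<Rightarrow> (nat \<Rightarrow> int) \<Rightarrow> (nat \<Rightarrow> int) \<Rightarrow> (int \<times> int) set" where
  "mirror_exponents k m n = {(0,0),(1,0),(0,1)} \<union> (\<lambda>i. (m i, n i)) ` {1..k}"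

text \<open>Mirror curve of a toric CY3: the monomials are exactly the lattice points of
  the (toric diagram) convex lattice polygon they span, each appearing once.\<close>
definition toric_mirror_data :: "nat \<Rightarrow> (nat \<Rightarrow> int) \<Rightarrow> (nat \<Rightarrow> int) \<Rightarrow> bool" where
  "toric_mirror_data k m n \<longleftrightarrow>
     inj_on (\<lambda>i. (m i, n i)) {1..k} \<and>
     (\<forall>i\<in>{1..k}. (m i, n i) \<notin> {(0,0),(1,0),(0,1)}) \<and>
     mirror_exponents k m n =
       {(a,b). (real_of_int a, real_of_int b) \<in>
          convex hull ((\<lambda>(a,b). (real_of_int a, real_of_int b)) ` mirror_exponents k m n)}"

definition framed_curve ::
  "nat \<Rightarrow> (nat \<Rightarrow> int) \<Rightarrow> (nat \<Rightarrow> int) \<Rightarrow> (nat \<Rightarrow> complex) \<Rightarrow> int \<Rightarrow> (complex \<times> complex) set" where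
  "framed_curve k m n r f =
     {(X, Y). X \<noteq> 0 \<and> Y \<noteq> 0 \<and>
        1 + X * Y powi (-f) + Y + (\<Sum>i=1..k. r i * (X * Y powi (-f)) powi (m i) * Y powi (n i)) = 0}"

end

theory Submission imports Defs "HOL-Computational_Algebra.Field_as_Ring" "Subresultants.Subresultant_Gcd" "HOL-Computational_Algebra.Fundamental_Theorem_Algebra" begin

definition ev :: "complex \<Rightarrow> complex poly poly \<Rightarrow> complex poly" where
  "ev x Q = map_poly (\<lambda>c. poly c x) Q"

lemma coeff_ev: "coeff (ev x Q) i = poly (coeff Q i) x"
  unfolding ev_def by (simp add: coeff_map_poly)

lemma degree_ev_le: "degree (ev x Q) \<le> degree Q"
  unfolding ev_def by (rule degree_map_poly_le)

lemma poly_sum_le: "degree (p::complex poly) \<le> n \<Longrightarrow> poly p y = (\<Sum>i\<le>n. coeff p i * y ^ i)"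
proof -
  assume a: "degree p \<le> n"
  have "poly p y = (\<Sum>i\<le>degree p. coeff p i * y ^ i)" by (rule poly_altdef)
  also have "\<dots> = (\<Sum>i\<le>n. coeff p i * y ^ i)"
    by (rule sum.mono_neutral_left) (use a le_degree in auto)
  finally show ?thesis .
qed

lemma poly_ev_sum: "poly (ev x Q) y = (\<Sum>i\<le>degree Q. poly (coeff Q i) x * y ^ i)"
  using poly_sum_le[OF degree_ev_le[of x Q]] by (simp add: coeff_ev)

lemma cont_ev2: "continuous_on A (\<lambda>z. poly (ev (fst z) Q) (snd z))"
  unfolding poly_ev_sum by (intro continuous_intros)

lemma cont_ev_x: "continuous_on A (\<lambda>x. poly (ev x Q) y)"
  unfolding poly_ev_sum by (intro continuous_intros)

lemma degree_ev: "poly (lead_coeff Q) x \<noteq> 0 \<Longrightarrow> degree (ev x Q) = degree Q"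
  by (metis coeff_ev degree_ev_le le_antisym le_degree)

lemma lead_coeff_ev: "poly (lead_coeff Q) x \<noteq> 0 \<Longrightarrow> lead_coeff (ev x Q) = poly (lead_coeff Q) x"
  by (simp add: degree_ev coeff_ev)

lemma root_perturb:
  assumes lc: "poly (lead_coeff Q) x0 \<noteq> 0" and z: "poly (ev x0 Q) z = 0" and e: "e > 0"
  shows "\<exists>d>0. \<forall>x. dist x x0 < d \<longrightarrow> (\<exists>w. dist w z < e \<and> poly (ev x Q) w = 0)"
proof -
  define n where "n = degree Q"
  define L where "L = norm (poly (lead_coeff Q) x0)"
  have L: "L > 0" using lc by (simp add: L_def)
  have c1: "continuous_on UNIV (\<lambda>x. poly (lead_coeff Q) x)" by (intro continuous_intros)
  have c2: "continuous_on UNIV (\<lambda>x. poly (ev x Q) z)" by (rule cont_ev_x)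
  have t1: "((\<lambda>x. poly (lead_coeff Q) x) \<longlongrightarrow> poly (lead_coeff Q) x0) (at x0)"
    using c1 by (simp add: continuous_on_eq_continuous_at isCont_def)
  have t2: "((\<lambda>x. poly (ev x Q) z) \<longlongrightarrow> poly (ev x0 Q) z) (at x0)"
    using c2 by (simp add: continuous_on_eq_continuous_at isCont_def)
  have "\<forall>\<^sub>F x in at x0. dist (poly (lead_coeff Q) x) (poly (lead_coeff Q) x0) < L/2"
    using t1 L unfolding tendsto_iff by (meson half_gt_zero)
  moreover have "\<forall>\<^sub>F x in at x0. dist (poly (ev x Q) z) (poly (ev x0 Q) z) < L/2 * e^n"
    using t2 L e unfolding tendsto_iff by (meson half_gt_zero mult_pos_pos zero_less_power)
  ultimately have "\<forall>\<^sub>F x in at x0. dist (poly (lead_coeff Q) x) (poly (lead_coeff Q) x0) < L/2 \<and>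
        dist (poly (ev x Q) z) (poly (ev x0 Q) z) < L/2 * e^n"
    by (rule eventually_conj)
  then obtain d where d: "d > 0" and dP: "\<And>x. x \<noteq> x0 \<Longrightarrow> dist x x0 < d \<Longrightarrow>
      dist (poly (lead_coeff Q) x) (poly (lead_coeff Q) x0) < L/2 \<and>
      dist (poly (ev x Q) z) (poly (ev x0 Q) z) < L/2 * e^n"
    unfolding eventually_at by blast
  have main: "\<exists>w. dist w z < e \<and> poly (ev x Q) w = 0" if x: "dist x x0 < d" for x
  proof (cases "x = x0")
    case True thus ?thesis using z e by (intro exI[of _ z]) auto
  next
    case False
    from dP[OF False x] have h1: "dist (poly (lead_coeff Q) x) (poly (lead_coeff Q) x0) < L/2"
      and h2: "norm (poly (ev x Q) z) < L/2 * e^n" using z by (auto simp: dist_norm)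
    have lx: "norm (poly (lead_coeff Q) x) > L/2"
      using h1 norm_triangle_ineq2[of "poly (lead_coeff Q) x0" "poly (lead_coeff Q) x"]
      by (simp add: L_def dist_norm norm_minus_commute)
    hence lx0: "poly (lead_coeff Q) x \<noteq> 0" using L by auto
    have deg: "degree (ev x Q) = n" using degree_ev[OF lx0] n_def by simp
    have lcx: "lead_coeff (ev x Q) = poly (lead_coeff Q) x" by (rule lead_coeff_ev[OF lx0])
    obtain rt where rt: "Polynomial.smult (lead_coeff (ev x Q)) (\<Prod>i<degree (ev x Q). [:-rt i, 1:]) = ev x Q"
      by (rule complex_poly_decompose')
    have pe: "poly (ev x Q) w = poly (lead_coeff Q) x * (\<Prod>i<n. w - rt i)" for w
    proof -
      have "poly (ev x Q) w = poly (Polynomial.smult (lead_coeff (ev x Q)) (\<Prod>i<degree (ev x Q). [:-rt i, 1:])) w"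
        using rt by simp
      also have "\<dots> = lead_coeff (ev x Q) * (\<Prod>i<degree (ev x Q). w - rt i)"
        by (simp add: poly_prod)
      finally show ?thesis by (simp add: deg coeff_ev n_def)
    qed
    show ?thesis
    proof (rule ccontr)
      assume nx: "\<not> ?thesis"
      have far: "e \<le> norm (z - rt i)" if "i < n" for i
      proof -
        have "poly (ev x Q) (rt i) = 0" using that by (simp add: pe) blast
        with nx have "\<not> dist (rt i) z < e" by blast
        thus ?thesis by (simp add: dist_norm norm_minus_commute)
      qed
      have "e^n \<le> (\<Prod>i<n. norm (z - rt i))"
        using prod_mono[of "{..<n}" "\<lambda>_. e" "\<lambda>i. norm (z - rt i)"] far e by auto
      hence "L/2 * e^n \<le> norm (poly (lead_coeff Q) x) * (\<Prod>i<n. norm (z - rt i))"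
        using lx L e by (intro mult_mono) auto
      also have "\<dots> = norm (poly (ev x Q) z)" by (simp add: pe norm_mult prod_norm)
      finally show False using h2 by simp
    qed
  qed
  thus ?thesis using d by blast
qed



interpretation evh: map_poly_idom_hom "\<lambda>p::complex poly. poly p a" ..

lemma ev_mult: "ev x (a*b) = ev x a * ev x b" unfolding ev_def by (rule evh.hom_mult)
lemma ev_dvd: "a dvd b \<Longrightarrow> ev x a dvd ev x b" unfolding ev_def by (rule evh.hom_dvd)
lemma ev_const: "ev x [:c:] = [:poly c x:]"
  by (rule poly_eqI) (simp add: coeff_ev coeff_pCons split: nat.split)
lemma ev_pderiv: "ev x (pderiv Q) = pderiv (ev x Q)" by (simp add: ev_def poly_hom.map_poly_pderiv)

lemma degree_prod_mset_0:
  fixes M :: "'a::idom poly multiset"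
  shows "(\<forall>p\<in>#M. degree p = 0) \<Longrightarrow> degree (prod_mset M) = 0"
proof (induction M)
  case empty then show ?case by simp
next
  case (add x M)
  then show ?case using degree_mult_le[of x "prod_mset M"] by simp
qed

lemma ev_one: "ev x 1 = 1" by (simp add: ev_def)

lemma poly_ev_prod_mset: "poly (ev x (prod_mset M)) y = (\<Prod>p\<in>#M. poly (ev x p) y)"
  by (induction M) (simp_all add: ev_mult ev_one)

lemma radical:
  fixes P :: "complex poly poly"
  assumes degP: "degree P > 0"
  obtains R where "degree R > 0" "resultant R (pderiv R) \<noteq> 0"
    "\<And>x y. ev x P \<noteq> 0 \<Longrightarrow> poly (ev x P) y = 0 \<longleftrightarrow> poly (ev x R) y = 0"
proof -
  have P0: "P \<noteq> 0" using degP by auto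
  define M where "M = prime_factorization P"
  define F where "F = {p. p \<in># M \<and> degree p > 0}"
  define R where "R = \<Prod>F"
  have finF: "finite F" unfolding F_def by (rule finite_subset[of _ "set_mset M"]) auto
  have primeF: "prime p" if "p \<in> F" for p using that by (auto simp: F_def M_def in_prime_factors_iff)
  have nn: "normalize (prod_mset M) = normalize P" unfolding M_def
    using P0 by (rule prod_mset_prime_factorization_weak)
  have MdvdP: "prod_mset M dvd P"
  proof -
    have "prod_mset M dvd normalize (prod_mset M)" by simp
    also have "\<dots> = normalize P" by (rule nn)
    finally show ?thesis by simp
  qed
  have PdvdM: "P dvd prod_mset M"
  proof -
    have "P dvd normalize P" by simp
    also have "\<dots> = normalize (prod_mset M)" by (rule nn[symmetric])
    finally show ?thesis by simp
  qed
  have M0: "prod_mset M \<noteq> 0" using MdvdP P0 PdvdM by auto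
  have Fne: "F \<noteq> {}"
  proof
    assume "F = {}"
    hence "\<forall>p\<in>#M. degree p = 0" by (auto simp: F_def)
    hence d0: "degree (prod_mset M) = 0" by (rule degree_prod_mset_0)
    have "degree P \<le> degree (prod_mset M)" using PdvdM M0 by (rule dvd_imp_degree_le)
    hence "degree P = 0" using d0 by simp
    thus False using degP by simp
  qed
  have F0: "0 \<notin> F" using primeF by (metis not_prime_0)
  have degR: "degree R > 0"
  proof -
    obtain p where p: "p \<in> F" using Fne by auto
    have "degree R = (\<Sum>q\<in>F. degree q)" unfolding R_def
      by (rule degree_prod_sum_eq) (use F0 in auto)
    also have "\<dots> \<ge> degree p" using p finF by (intro member_le_sum) auto
    finally show ?thesis using p by (auto simp: F_def)
  qed
  have RdvdP: "R dvd P"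
  proof -
    have "R = prod_mset (mset_set F)" unfolding R_def by (simp add: prod_unfold_prod_mset)
    moreover have "mset_set F \<subseteq># M"
      using finF by (auto simp: subseteq_mset_def count_mset_set' F_def)
    ultimately have "R dvd prod_mset M" by (simp add: prod_mset_subset_imp_dvd)
    also have "prod_mset M dvd P" by (rule MdvdP)
    finally show ?thesis .
  qed
  have roots: "poly (ev x P) y = 0 \<longleftrightarrow> poly (ev x R) y = 0" if evP: "ev x P \<noteq> 0" for x y
  proof
    assume "poly (ev x R) y = 0"
    moreover from RdvdP obtain H where "P = R * H" by (auto elim: dvdE)
    ultimately show "poly (ev x P) y = 0" by (simp add: ev_mult)
  next
    assume z: "poly (ev x P) y = 0"
    from PdvdM obtain H where "prod_mset M = P * H" by (auto elim: dvdE)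
    hence "poly (ev x (prod_mset M)) y = poly (ev x P) y * poly (ev x H) y"
      by (simp add: ev_mult)
    hence "(\<Prod>p\<in>#M. poly (ev x p) y) = 0"
      using z by (simp add: poly_ev_prod_mset)
    then obtain p where pM: "p \<in># M" and pz: "poly (ev x p) y = 0"
      by (auto simp: prod_mset_zero_iff)
    show "poly (ev x R) y = 0"
    proof (cases "degree p > 0")
      case True
      hence pF: "p \<in> F" using pM by (auto simp: F_def)
      have "R = p * \<Prod>(F - {p})" unfolding R_def using finF pF by (simp add: prod.remove)
      thus ?thesis using pz by (simp add: ev_mult)
    next
      case False
      hence "degree p = 0" by simp
      hence "p = [:coeff p 0:]" by (rule degree_0_id[symmetric])
      hence "ev x p = [:poly (coeff p 0) x:]" using ev_const[of x "coeff p 0"] by simp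
      with pz have evp0: "ev x p = 0" by (simp add: poly_pCons)
      have "p dvd P" using pM by (simp add: M_def in_prime_factors_imp_dvd)
      then obtain H where "P = p * H" by (auto elim: dvdE)
      hence "ev x P = 0" using evp0 by (simp add: ev_mult)
      thus ?thesis using evP by simp
    qed
  qed
  have res: "resultant R (pderiv R) \<noteq> 0"
  proof
    assume "resultant R (pderiv R) = 0"
    hence dg: "degree (gcd R (pderiv R)) \<noteq> 0" by (simp add: resultant_0_gcd)
    define g where "g = gcd R (pderiv R)"
    have R0: "R \<noteq> 0" using degR by auto
    hence g0: "g \<noteq> 0" by (simp add: g_def)
    have "\<exists>q\<in>#prime_factorization g. degree q > 0"
    proof (rule ccontr)
      assume "\<not> ?thesis"
      hence "\<forall>q\<in>#prime_factorization g. degree q = 0" by auto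
      hence d0: "degree (prod_mset (prime_factorization g)) = 0" by (rule degree_prod_mset_0)
      have nng: "normalize (prod_mset (prime_factorization g)) = normalize g"
        using g0 by (rule prod_mset_prime_factorization_weak)
      have "g dvd prod_mset (prime_factorization g)"
      proof -
        have "g dvd normalize g" by simp
        also have "\<dots> = normalize (prod_mset (prime_factorization g))" by (rule nng[symmetric])
        finally show ?thesis by simp
      qed
      moreover have "prod_mset (prime_factorization g) \<noteq> 0" using nng g0 by auto
      ultimately have "degree g \<le> degree (prod_mset (prime_factorization g))" by (rule dvd_imp_degree_le)
      hence "degree g = 0" using d0 by simp
      thus False using dg g_def by simp
    qed
    then obtain q where qg: "q \<in># prime_factorization g" and dq: "degree q > 0" by auto
    have qprime: "prime q" using qg by (simp add: in_prime_factors_iff)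
    have qdvdg: "q dvd g" using qg by (simp add: in_prime_factors_imp_dvd)
    have "g dvd R" unfolding g_def by (rule gcd_dvd1)
    with qdvdg have qR: "q dvd R" by (rule dvd_trans)
    have "g dvd pderiv R" unfolding g_def by (rule gcd_dvd2)
    with qdvdg have qR': "q dvd pderiv R" by (rule dvd_trans)
    from qR obtain p where pF: "p \<in> F" and qp: "q dvd p"
      unfolding R_def using prime_dvd_prod_iff[OF finF qprime, of id] by auto
    have "q = p" using primes_dvd_imp_eq[OF qprime primeF[OF pF] qp] .
    have pR': "p dvd pderiv R" using qR' \<open>q = p\<close> by simp
    have "pderiv R = (\<Sum>a\<in>F. \<Prod>(F - {a}) * pderiv a)"
      unfolding R_def using pderiv_prod[of id F] by simp
    also have "\<dots> = \<Prod>(F - {p}) * pderiv p + (\<Sum>a\<in>F - {p}. \<Prod>(F - {a}) * pderiv a)"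
      using finF pF by (simp add: sum.remove)
    finally have eq: "pderiv R = \<Prod>(F - {p}) * pderiv p + (\<Sum>a\<in>F - {p}. \<Prod>(F - {a}) * pderiv a)" .
    have "p dvd (\<Sum>a\<in>F - {p}. \<Prod>(F - {a}) * pderiv a)"
    proof (rule dvd_sum)
      fix a assume a: "a \<in> F - {p}"
      have "p dvd \<Prod>(F - {a})" using a pF finF by (intro dvd_prodI) auto
      thus "p dvd \<Prod>(F - {a}) * pderiv a" by simp
    qed
    from dvd_add_left_iff[OF this, of "\<Prod>(F - {p}) * pderiv p"] pR' eq
    have "p dvd \<Prod>(F - {p}) * pderiv p" by simp
    hence "p dvd \<Prod>(F - {p}) \<or> p dvd pderiv p" using primeF[OF pF] by (simp add: prime_dvd_mult_iff)
    thus False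
    proof
      assume "p dvd \<Prod>(F - {p})"
      then obtain a where a: "a \<in> F - {p}" and "p dvd id a"
        using prime_dvd_prod_iff[of "F - {p}" p id] finF primeF[OF pF] by auto
      have "a \<in> F" using a by simp
      hence "p = a" using primes_dvd_imp_eq[OF primeF[OF pF] primeF[OF \<open>a \<in> F\<close>]] \<open>p dvd id a\<close> by simp
      thus False using a by auto
    next
      assume pd: "p dvd pderiv p"
      have dp: "degree p > 0" using pF by (simp add: F_def)
      hence "pderiv p \<noteq> 0" by (simp add: pderiv_eq_0_iff)
      hence "degree p \<le> degree (pderiv p)" using pd by (rule dvd_imp_degree_le[rotated])
      thus False using dp by (simp add: degree_pderiv)
    qed
  qed
  show ?thesis using that degR res roots by blast
qed



lemma res_no_common_root:
  fixes p q :: "complex poly"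
  assumes "resultant p q \<noteq> 0" "p \<noteq> 0" "poly p a = 0" "poly q a = 0"
  shows False
proof -
  have dg: "degree (gcd p q) = 0" using assms(1) by (simp add: resultant_0_gcd)
  have "[:-a,1:] dvd p" "[:-a,1:] dvd q" using assms(3,4) by (simp_all add: poly_eq_0_iff_dvd)
  hence "[:-a,1:] dvd gcd p q" by simp
  moreover have "gcd p q \<noteq> 0" using assms(2) by simp
  ultimately have "degree [:-a,1:] \<le> degree (gcd p q)" by (rule dvd_imp_degree_le)
  thus False using dg by simp
qed

lemma card_roots_rsquarefree:
  fixes p :: "complex poly"
  assumes "rsquarefree p"
  shows "card {z. poly p z = 0} = degree p"
proof -
  have p0: "p \<noteq> 0" using assms by (simp add: rsquarefree_def)
  have fin: "finite {z. poly p z = 0}" using p0 by (rule poly_roots_finite)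
  have "degree p = degree (Polynomial.smult (lead_coeff p) (\<Prod>z|poly p z = 0. [:-z, 1:]))"
    using complex_poly_decompose_rsquarefree[OF assms] by simp
  also have "\<dots> = degree (\<Prod>z|poly p z = 0. [:-z, 1:])" using p0 by simp
  also have "\<dots> = (\<Sum>z|poly p z = 0. degree [:-z, 1:])"
    by (rule degree_prod_sum_eq) auto
  also have "\<dots> = card {z. poly p z = 0}" by simp
  finally show ?thesis by simp
qed

lemma generic_card:
  fixes R :: "complex poly poly"
  assumes res: "poly (resultant R (pderiv R)) x \<noteq> 0"
    and lc: "poly (lead_coeff R) x \<noteq> 0" and lc': "poly (lead_coeff (pderiv R)) x \<noteq> 0"
  shows "card {y. poly (ev x R) y = 0} = degree R"
proof -
  have d1: "degree (ev x R) = degree R" by (rule degree_ev[OF lc])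
  have d2: "degree (ev x (pderiv R)) = degree (pderiv R)" by (rule degree_ev[OF lc'])
  have "resultant (ev x R) (ev x (pderiv R)) = poly (resultant R (pderiv R)) x"
    using poly_hom.resultant_map_poly[of x R "pderiv R"] d1 d2 by (simp add: ev_def)
  hence r: "resultant (ev x R) (pderiv (ev x R)) \<noteq> 0" using res by (simp add: ev_pderiv)
  have e0: "ev x R \<noteq> 0" using lc lead_coeff_ev[OF lc] by auto
  have "rsquarefree (ev x R)" unfolding rsquarefree_roots
    using res_no_common_root[OF r e0] by blast
  hence "card {y. poly (ev x R) y = 0} = degree (ev x R)" by (rule card_roots_rsquarefree)
  thus ?thesis using d1 by simp
qed

lemma finite_common_pos:
  fixes Q :: "'a \<Rightarrow> real \<Rightarrow> bool"
  assumes "finite A" "\<And>a. a\<in>A \<Longrightarrow> \<exists>d>0. \<forall>d'. 0<d' \<longrightarrow> d' \<le> d \<longrightarrow> Q a d'"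
  shows "\<exists>d>0. \<forall>a\<in>A. \<forall>d'. 0<d' \<longrightarrow> d' \<le> d \<longrightarrow> Q a d'"
  using assms
proof (induction A rule: finite_induct)
  case empty then show ?case by (intro exI[of _ 1]) auto
next
  case (insert a A)
  then obtain d1 where d1: "d1 > 0" "\<forall>b\<in>A. \<forall>d'. 0<d' \<longrightarrow> d' \<le> d1 \<longrightarrow> Q b d'" by auto
  obtain d2 where d2: "d2 > 0" "\<forall>d'. 0<d' \<longrightarrow> d' \<le> d2 \<longrightarrow> Q a d'" using insert.prems by auto
  show ?case using d1 d2 by (intro exI[of _ "min d1 d2"]) auto
qed

lemma covering_roots:
  fixes R :: "complex poly poly" and U :: "complex set"
  assumes U: "open U" and lc: "\<And>x. x\<in>U \<Longrightarrow> poly (lead_coeff R) x \<noteq> 0"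
    and card: "\<And>x. x\<in>U \<Longrightarrow> card {y. poly (ev x R) y = 0} = degree R"
    and d: "degree R > 0"
  shows "covering_space {z. fst z \<in> U \<and> poly (ev (fst z) R) (snd z) = 0} fst U"
proof -
  define C where "C = {z. fst z \<in> U \<and> poly (ev (fst z) R) (snd z) = 0}"
  have ev0: "ev x R \<noteq> 0" if "x \<in> U" for x using lc[OF that] lead_coeff_ev[OF lc[OF that]] by auto
  have finr: "finite {y. poly (ev x R) y = 0}" if "x \<in> U" for x by (rule poly_roots_finite[OF ev0[OF that]])
  have img: "fst ` C = U"
  proof
    show "fst ` C \<subseteq> U" by (auto simp: C_def)
    show "U \<subseteq> fst ` C"
    proof
      fix x assume x: "x \<in> U"
      have "{y. poly (ev x R) y = 0} \<noteq> {}" using card[OF x] d by (metis card.empty less_irrefl)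
      then obtain y where "poly (ev x R) y = 0" by auto
      hence "(x,y) \<in> C" using x by (simp add: C_def)
      thus "x \<in> fst ` C" by force
    qed
  qed
  have local: "\<exists>T. x0 \<in> T \<and> openin (top_of_set U) T \<and>
      (\<exists>v. \<Union>v = C \<inter> fst -` T \<and> (\<forall>u\<in>v. openin (top_of_set C) u) \<and>
        pairwise disjnt v \<and> (\<forall>u\<in>v. \<exists>q. homeomorphism u T fst q))" if x0: "x0 \<in> U" for x0
  proof -
    define Z where "Z = {y. poly (ev x0 R) y = 0}"
    have finZ: "finite Z" unfolding Z_def by (rule finr[OF x0])
    have cardZ: "card Z = degree R" unfolding Z_def by (rule card[OF x0])
    obtain \<epsilon> where \<epsilon>: "\<epsilon> > 0" and sep: "\<And>z z'. z \<in> Z \<Longrightarrow> z' \<in> Z \<Longrightarrow> z' \<noteq> z \<Longrightarrow> 2 * \<epsilon> \<le> dist z z'"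
    proof -
      have "\<exists>d>0. \<forall>a\<in>Z. \<forall>d'. 0<d' \<longrightarrow> d' \<le> d \<longrightarrow> (\<forall>z'\<in>Z. z' \<noteq> a \<longrightarrow> 2 * d' \<le> dist a z')"
      proof (rule finite_common_pos[OF finZ])
        fix a assume "a \<in> Z"
        obtain e where e: "e > 0" "\<forall>x\<in>Z. x \<noteq> a \<longrightarrow> e \<le> dist a x"
          using finite_set_avoid[OF finZ, of a] by blast
        show "\<exists>d>0. \<forall>d'. 0<d' \<longrightarrow> d' \<le> d \<longrightarrow> (\<forall>z'\<in>Z. z' \<noteq> a \<longrightarrow> 2 * d' \<le> dist a z')"
          using e by (intro exI[of _ "e/2"]) force
      qed
      then obtain d where "d > 0" "\<forall>a\<in>Z. \<forall>z'\<in>Z. z' \<noteq> a \<longrightarrow> 2 * d \<le> dist a z'" by auto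
      thus ?thesis using that by blast
    qed
    have disj: "z = z'" if "z \<in> Z" "z' \<in> Z" "dist w z < \<epsilon>" "dist w z' < \<epsilon>" for z z' w
    proof (rule ccontr)
      assume "z \<noteq> z'"
      hence "2 * \<epsilon> \<le> dist z z'" using sep that by metis
      moreover have "dist z z' \<le> dist w z + dist w z'" by (rule dist_triangle3)
      ultimately show False using that by simp
    qed
    obtain \<delta> where \<delta>: "\<delta> > 0" and pert: "\<And>z x. z \<in> Z \<Longrightarrow> dist x x0 < \<delta> \<Longrightarrow>
        \<exists>w. dist w z < \<epsilon> \<and> poly (ev x R) w = 0"
    proof -
      have "\<exists>d>0. \<forall>a\<in>Z. \<forall>d'. 0<d' \<longrightarrow> d' \<le> d \<longrightarrow>
             (\<forall>x. dist x x0 < d' \<longrightarrow> (\<exists>w. dist w a < \<epsilon> \<and> poly (ev x R) w = 0))"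
      proof (rule finite_common_pos[OF finZ])
        fix a assume a: "a \<in> Z"
        obtain d where "d > 0" "\<forall>x. dist x x0 < d \<longrightarrow> (\<exists>w. dist w a < \<epsilon> \<and> poly (ev x R) w = 0)"
          using root_perturb[OF lc[OF x0] _ \<epsilon>, of a] a by (auto simp: Z_def)
        thus "\<exists>d>0. \<forall>d'. 0<d' \<longrightarrow> d' \<le> d \<longrightarrow>
             (\<forall>x. dist x x0 < d' \<longrightarrow> (\<exists>w. dist w a < \<epsilon> \<and> poly (ev x R) w = 0))"
          by (intro exI[of _ d]) auto
      qed
      then obtain d where "d > 0" "\<forall>a\<in>Z. \<forall>x. dist x x0 < d \<longrightarrow> (\<exists>w. dist w a < \<epsilon> \<and> poly (ev x R) w = 0)"
        by auto
      thus ?thesis using that by blast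
    qed
    obtain \<delta>0 where \<delta>0: "\<delta>0 > 0" "ball x0 \<delta>0 \<subseteq> U" using U x0 open_contains_ball by blast
    define W where "W = ball x0 (min \<delta> \<delta>0)"
    have WU: "W \<subseteq> U" using \<delta>0 by (auto simp: W_def)
    have oW: "open W" by (simp add: W_def)
    have x0W: "x0 \<in> W" using \<delta> \<delta>0 by (simp add: W_def)
    define g where "g z x = (SOME w. dist w z < \<epsilon> \<and> poly (ev x R) w = 0)" for z x
    have G1: "dist (g z x) z < \<epsilon> \<and> poly (ev x R) (g z x) = 0" if "z \<in> Z" "x \<in> W" for z x
    proof -
      have "dist x x0 < \<delta>" using that by (simp add: W_def dist_commute)
      from pert[OF that(1) this] show ?thesis unfolding g_def by (rule someI_ex)
    qed
    have G2: "\<exists>z\<in>Z. w = g z x" if x: "x \<in> W" and w: "poly (ev x R) w = 0" for x w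
    proof -
      have sub: "(\<lambda>z. g z x) ` Z \<subseteq> {y. poly (ev x R) y = 0}" using G1 x by auto
      have inj: "inj_on (\<lambda>z. g z x) Z"
      proof (rule inj_onI)
        fix z z' assume "z \<in> Z" "z' \<in> Z" "g z x = g z' x"
        thus "z = z'" using G1[OF \<open>z \<in> Z\<close> x] G1[OF \<open>z' \<in> Z\<close> x] disj by metis
      qed
      have "card ((\<lambda>z. g z x) ` Z) = card {y. poly (ev x R) y = 0}"
        using card_image[OF inj] cardZ card[of x] x WU by auto
      hence "(\<lambda>z. g z x) ` Z = {y. poly (ev x R) y = 0}"
        using card_subset_eq[OF finr sub] x WU by auto
      thus ?thesis using w by auto
    qed
    have G3: "w = g z x" if x: "x \<in> W" and w: "poly (ev x R) w = 0" and z: "z \<in> Z" and dz: "dist w z < \<epsilon>" for x w z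
    proof -
      obtain z' where z': "z' \<in> Z" "w = g z' x" using G2[OF x w] by auto
      have "dist w z' < \<epsilon>" using G1[OF z'(1) x] z'(2) by simp
      hence "z = z'" using disj[OF z z'(1) dz] by simp
      thus ?thesis using z' by simp
    qed
    have gcont: "continuous_on W (g z)" if z: "z \<in> Z" for z
      unfolding continuous_on_iff
    proof (intro ballI allI impI)
      fix x1 :: complex and e :: real
      assume x1: "x1 \<in> W" and e: "e > 0"
      define w1 where "w1 = g z x1"
      have w1: "dist w1 z < \<epsilon>" "poly (ev x1 R) w1 = 0" using G1[OF z x1] by (auto simp: w1_def)
      define r where "r = min e (\<epsilon> - dist w1 z)"
      have r: "r > 0" using e w1 by (simp add: r_def)
      obtain dd where dd: "dd > 0" "\<forall>x. dist x x1 < dd \<longrightarrow> (\<exists>w. dist w w1 < r \<and> poly (ev x R) w = 0)"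
        using root_perturb[OF lc w1(2) r] x1 WU by auto
      show "\<exists>dd>0. \<forall>x'\<in>W. dist x' x1 < dd \<longrightarrow> dist (g z x') (g z x1) < e"
      proof (intro exI[of _ dd] conjI ballI impI)
        show "dd > 0" by (rule dd(1))
        fix x assume x: "x \<in> W" "dist x x1 < dd"
        then obtain w where w: "dist w w1 < r" "poly (ev x R) w = 0" using dd(2) by auto
        have "dist w z \<le> dist w w1 + dist w1 z" by (rule dist_triangle)
        also have "\<dots> < \<epsilon>" using w(1) by (simp add: r_def)
        finally have "w = g z x" using G3[OF x(1) w(2) z] by simp
        thus "dist (g z x) (g z x1) < e" using w(1) by (simp add: w1_def r_def)
      qed
    qed
    define v where "v = (\<lambda>z. C \<inter> (W \<times> ball z \<epsilon>)) ` Z"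
    have uchar: "C \<inter> (W \<times> ball z \<epsilon>) = (\<lambda>x. (x, g z x)) ` W" if z: "z \<in> Z" for z
    proof
      show "C \<inter> (W \<times> ball z \<epsilon>) \<subseteq> (\<lambda>x. (x, g z x)) ` W"
      proof
        fix p assume p: "p \<in> C \<inter> (W \<times> ball z \<epsilon>)"
        obtain x w where pxw: "p = (x,w)" by (cases p)
        have "x \<in> W" "poly (ev x R) w = 0" "dist w z < \<epsilon>" using p pxw by (auto simp: C_def dist_commute)
        hence "w = g z x" using G3 z by blast
        thus "p \<in> (\<lambda>x. (x, g z x)) ` W" using pxw \<open>x \<in> W\<close> by auto
      qed
      show "(\<lambda>x. (x, g z x)) ` W \<subseteq> C \<inter> (W \<times> ball z \<epsilon>)"
        using G1[OF z] WU by (auto simp: C_def dist_commute)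
    qed
    show ?thesis
    proof (intro exI conjI)
      show "x0 \<in> W" by (rule x0W)
      show "openin (top_of_set U) W" using openin_open_Int[OF oW, of U] WU by (simp add: Int_absorb1 Int_commute)
      show "\<Union>v = C \<inter> fst -` W"
      proof
        show "\<Union>v \<subseteq> C \<inter> fst -` W" by (auto simp: v_def)
        show "C \<inter> fst -` W \<subseteq> \<Union>v"
        proof
          fix p assume p: "p \<in> C \<inter> fst -` W"
          obtain x w where pxw: "p = (x,w)" by (cases p)
          have x: "x \<in> W" and w: "poly (ev x R) w = 0" using p pxw by (auto simp: C_def)
          obtain z where z: "z \<in> Z" "w = g z x" using G2[OF x w] by auto
          have "dist w z < \<epsilon>" using G1[OF z(1) x] z(2) by simp
          hence "p \<in> C \<inter> (W \<times> ball z \<epsilon>)" using p pxw x by (auto simp: dist_commute)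
          thus "p \<in> \<Union>v" using z(1) by (auto simp: v_def)
        qed
      qed
      show "\<forall>u\<in>v. openin (top_of_set C) u"
      proof
        fix u assume "u \<in> v"
        then obtain z where "u = C \<inter> (W \<times> ball z \<epsilon>)" by (auto simp: v_def)
        moreover have "open (W \<times> ball z \<epsilon>)" using oW by (intro open_Times) auto
        ultimately show "openin (top_of_set C) u" by (auto intro: openin_open_Int)
      qed
      show "pairwise disjnt v"
        unfolding pairwise_def v_def
      proof (intro ballI impI)
        fix u1 u2 assume u1: "u1 \<in> (\<lambda>z. C \<inter> (W \<times> ball z \<epsilon>)) ` Z" and u2: "u2 \<in> (\<lambda>z. C \<inter> (W \<times> ball z \<epsilon>)) ` Z"
          and ne: "u1 \<noteq> u2"
        obtain z1 where z1: "z1 \<in> Z" "u1 = C \<inter> (W \<times> ball z1 \<epsilon>)" using u1 by auto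
        obtain z2 where z2: "z2 \<in> Z" "u2 = C \<inter> (W \<times> ball z2 \<epsilon>)" using u2 by auto
        show "disjnt u1 u2" unfolding disjnt_def
        proof (rule ccontr)
          assume "u1 \<inter> u2 \<noteq> {}"
          then obtain p where "p \<in> u1" "p \<in> u2" by auto
          hence "dist (snd p) z1 < \<epsilon>" "dist (snd p) z2 < \<epsilon>" using z1 z2 by (auto simp: dist_commute mem_Times_iff)
          hence "z1 = z2" using disj z1(1) z2(1) by blast
          thus False using ne z1 z2 by simp
        qed
      qed
      show "\<forall>u\<in>v. \<exists>q. homeomorphism u W fst q"
      proof
        fix u assume "u \<in> v"
        then obtain z where z: "z \<in> Z" and u: "u = (\<lambda>x. (x, g z x)) ` W"
          using uchar by (auto simp: v_def)
        have "homeomorphism u W fst (\<lambda>x. (x, g z x))"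
          unfolding homeomorphism_def u
        proof (intro conjI)
          show "continuous_on W (\<lambda>x. (x, g z x))"
            by (intro continuous_on_Pair continuous_on_id gcont[OF z])
        qed (auto intro!: continuous_intros simp: image_image)
        thus "\<exists>q. homeomorphism u W fst q" by blast
      qed
    qed
  qed
  show ?thesis unfolding C_def[symmetric]
  proof (rule covering_spaceI)
    show "continuous_on C fst" by (intro continuous_intros)
    show "fst ` C = U" by (rule img)
    show "\<And>x. x \<in> U \<Longrightarrow> \<exists>T. x \<in> T \<and> openin (top_of_set U) T \<and>
      (\<exists>v. \<Union>v = C \<inter> fst -` T \<and> (\<forall>u\<in>v. openin (top_of_set C) u) \<and>
        pairwise disjnt v \<and> (\<forall>u\<in>v. \<exists>q. homeomorphism u T fst q))" by (rule local)
  qed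
qed



lemma cauchy_upper:
  fixes p :: "complex poly"
  assumes r: "poly p y = 0" and lc: "lead_coeff p \<noteq> 0" and y1: "norm y \<ge> 1"
  shows "norm (lead_coeff p) * norm y \<le> (\<Sum>i<degree p. norm (coeff p i))"
proof (cases "degree p")
  case 0
  hence "poly p y = lead_coeff p" by (metis degree_0_id poly_const_conv)
  thus ?thesis using r lc by simp
next
  case (Suc m)
  define n where "n = degree p"
  have "poly p y = (\<Sum>i<Suc n. coeff p i * y ^ i)" using poly_altdef[of p y]
    by (simp add: n_def lessThan_Suc_atMost)
  also have "\<dots> = (\<Sum>i<n. coeff p i * y ^ i) + lead_coeff p * y ^ n" by (simp add: n_def)
  finally have eq: "lead_coeff p * y ^ n = - (\<Sum>i<n. coeff p i * y ^ i)" using r by (simp add: add_eq_0_iff)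
  have "norm (lead_coeff p) * norm y ^ n = norm (\<Sum>i<n. coeff p i * y ^ i)"
    using arg_cong[OF eq, of norm] by (simp add: norm_mult norm_power)
  also have "\<dots> \<le> (\<Sum>i<n. norm (coeff p i) * norm y ^ i)"
    by (rule order_trans[OF norm_sum]) (simp add: norm_mult norm_power)
  also have "\<dots> \<le> (\<Sum>i<n. norm (coeff p i) * norm y ^ m)"
  proof (rule sum_mono)
    fix i assume "i \<in> {..<n}"
    hence "i \<le> m" using Suc n_def by simp
    thus "norm (coeff p i) * norm y ^ i \<le> norm (coeff p i) * norm y ^ m"
      using y1 by (intro mult_left_mono power_increasing) auto
  qed
  also have "\<dots> = (\<Sum>i<n. norm (coeff p i)) * norm y ^ m" by (simp add: sum_distrib_right)
  finally have "(norm (lead_coeff p) * norm y) * norm y ^ m \<le> (\<Sum>i<n. norm (coeff p i)) * norm y ^ m"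
    using Suc n_def by (simp add: mult_ac)
  moreover have "norm y ^ m > 0" using y1 by (intro zero_less_power) linarith
  ultimately show ?thesis by (simp add: n_def)
qed

lemma cauchy_lower:
  fixes p :: "complex poly"
  assumes r: "poly p y = 0" and y1: "norm y \<le> 1"
  shows "norm (coeff p 0) \<le> norm y * (\<Sum>i\<le>degree p. norm (coeff p i))"
proof -
  define n where "n = degree p"
  have "poly p y = (\<Sum>i\<le>n. coeff p i * y ^ i)" using poly_altdef[of p y] by (simp add: n_def)
  also have "\<dots> = coeff p 0 + (\<Sum>i\<in>{1..n}. coeff p i * y ^ i)"
    by (simp add: atMost_atLeast0 sum.atLeast_Suc_atMost)
  finally have eq: "coeff p 0 = - (\<Sum>i\<in>{1..n}. coeff p i * y ^ i)" using r by (simp add: add_eq_0_iff)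
  have "norm (coeff p 0) = norm (\<Sum>i\<in>{1..n}. coeff p i * y ^ i)" using eq by simp
  also have "\<dots> \<le> (\<Sum>i\<in>{1..n}. norm (coeff p i) * norm y ^ i)"
    by (rule order_trans[OF norm_sum]) (simp add: norm_mult norm_power)
  also have "\<dots> \<le> (\<Sum>i\<in>{1..n}. norm (coeff p i) * norm y)"
  proof (rule sum_mono)
    fix i assume "i \<in> {1..n}"
    hence "norm y ^ i \<le> norm y ^ 1" using y1 by (intro power_decreasing) auto
    thus "norm (coeff p i) * norm y ^ i \<le> norm (coeff p i) * norm y" by (simp add: mult_left_mono)
  qed
  also have "\<dots> \<le> (\<Sum>i\<le>n. norm (coeff p i) * norm y)"
    by (rule sum_mono2) auto
  also have "\<dots> = norm y * (\<Sum>i\<le>n. norm (coeff p i))" by (simp add: sum_distrib_left mult_ac)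
  finally show ?thesis by (simp add: n_def)
qed



lemma proper_part:
  fixes P :: "complex poly poly"
  assumes lcP: "\<And>x. x \<noteq> 0 \<Longrightarrow> poly (lead_coeff P) x \<noteq> 0"
    and c0P: "\<And>x. x \<noteq> 0 \<Longrightarrow> poly (coeff P 0) x \<noteq> 0"
    and K: "K \<subseteq> - {0}" "compact K"
  shows "compact {z \<in> {(x,y). x \<noteq> 0 \<and> y \<noteq> 0 \<and> poly (ev x P) y = 0}. fst z \<in> K}"
proof (cases "K = {}")
  case True thus ?thesis by simp
next
  case Kne: False
  define n where "n = degree P"
  define fl where "fl x = norm (poly (lead_coeff P) x)" for x
  define f0 where "f0 x = norm (poly (coeff P 0) x)" for x
  define s where "s x = (\<Sum>i\<le>n. norm (poly (coeff P i) x))" for x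
  have cfl: "continuous_on K fl" unfolding fl_def by (intro continuous_intros)
  have cf0: "continuous_on K f0" unfolding f0_def by (intro continuous_intros)
  have cs: "continuous_on K s" unfolding s_def by (intro continuous_intros)
  obtain a where a: "a \<in> K" "\<And>x. x \<in> K \<Longrightarrow> fl a \<le> fl x"
    using compact_attains_inf[OF compact_continuous_image[OF cfl K(2)]] Kne by auto
  obtain a0 where a0: "a0 \<in> K" "\<And>x. x \<in> K \<Longrightarrow> f0 a0 \<le> f0 x"
    using compact_attains_inf[OF compact_continuous_image[OF cf0 K(2)]] Kne by auto
  obtain b where b: "b \<in> K" "\<And>x. x \<in> K \<Longrightarrow> s x \<le> s b"
    using compact_attains_sup[OF compact_continuous_image[OF cs K(2)]] Kne by auto
  define m1 where "m1 = fl a"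
  define m0 where "m0 = f0 a0"
  define B where "B = s b"
  have "a \<noteq> 0" using a(1) K(1) by auto
  hence m1: "m1 > 0" using lcP[of a] by (simp add: m1_def fl_def)
  have "a0 \<noteq> 0" using a0(1) K(1) by auto
  hence m0: "m0 > 0" using c0P[of a0] by (simp add: m0_def f0_def)
  have f0s: "f0 x \<le> s x" for x unfolding f0_def s_def
    by (rule member_le_sum[of 0 "{..n}" "\<lambda>i. norm (poly (coeff P i) x)", simplified])
  have B: "B > 0" using f0s[of a0] b(2)[OF a0(1)] m0 by (simp add: m0_def B_def)
  define M where "M = max 1 (B / m1)"
  define \<eta> where "\<eta> = min 1 (m0 / B)"
  have \<eta>: "\<eta> > 0" using m0 B by (simp add: \<eta>_def)
  have bounds: "\<eta> \<le> norm y \<and> norm y \<le> M" if x: "x \<in> K" and r: "poly (ev x P) y = 0" for x y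
  proof -
    have x0: "x \<noteq> 0" using x K by auto
    have deg: "degree (ev x P) = n" using degree_ev[OF lcP[OF x0]] by (simp add: n_def)
    have lce: "lead_coeff (ev x P) = poly (lead_coeff P) x" by (rule lead_coeff_ev[OF lcP[OF x0]])
    have up: "norm y \<le> M"
    proof (cases "norm y \<ge> 1")
      case True
      have "norm (lead_coeff (ev x P)) * norm y \<le> (\<Sum>i<degree (ev x P). norm (coeff (ev x P) i))"
        by (rule cauchy_upper[OF r _ True]) (use lce lcP[OF x0] in simp)
      also have "\<dots> = (\<Sum>i<n. norm (poly (coeff P i) x))" by (simp add: deg coeff_ev)
      also have "\<dots> \<le> s x" unfolding s_def by (rule sum_mono2) auto
      also have "\<dots> \<le> B" using b(2)[OF x] by (simp add: B_def)
      finally have "fl x * norm y \<le> B" using lce by (simp add: fl_def)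
      moreover have "m1 * norm y \<le> fl x * norm y" using a(2)[OF x] True by (simp add: m1_def mult_right_mono)
      ultimately have "m1 * norm y \<le> B" by simp
      hence "norm y \<le> B / m1" using m1 by (simp add: field_simps)
      thus ?thesis by (simp add: M_def)
    qed (simp add: M_def)
    have lo: "\<eta> \<le> norm y"
    proof (cases "norm y \<le> 1")
      case True
      have "norm (coeff (ev x P) 0) \<le> norm y * (\<Sum>i\<le>degree (ev x P). norm (coeff (ev x P) i))"
        by (rule cauchy_lower[OF r True])
      hence "f0 x \<le> norm y * s x" by (simp add: deg coeff_ev f0_def s_def)
      also have "\<dots> \<le> norm y * B" using b(2)[OF x] by (simp add: B_def mult_left_mono)
      finally have "m0 \<le> norm y * B" using a0(2)[OF x] by (simp add: m0_def)
      hence "m0 / B \<le> norm y" using B by (simp add: field_simps)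
      thus ?thesis by (simp add: \<eta>_def)
    qed (simp add: \<eta>_def)
    show ?thesis using up lo by simp
  qed
  define F where "F z = poly (ev (fst z) P) (snd z)" for z
  have eqset: "{z \<in> {(x,y). x \<noteq> 0 \<and> y \<noteq> 0 \<and> poly (ev x P) y = 0}. fst z \<in> K} =
     ((K \<times> cball 0 M) \<inter> {z. F z = 0}) \<inter> {z. \<eta> \<le> norm (snd z)}"
  proof (intro equalityI subsetI)
    fix z assume z: "z \<in> {z \<in> {(x,y). x \<noteq> 0 \<and> y \<noteq> 0 \<and> poly (ev x P) y = 0}. fst z \<in> K}"
    obtain x y where zxy: "z = (x,y)" by (cases z)
    have "x \<in> K" "poly (ev x P) y = 0" using z zxy by auto
    thus "z \<in> ((K \<times> cball 0 M) \<inter> {z. F z = 0}) \<inter> {z. \<eta> \<le> norm (snd z)}"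
      using bounds zxy by (auto simp: F_def)
  next
    fix z assume z: "z \<in> ((K \<times> cball 0 M) \<inter> {z. F z = 0}) \<inter> {z. \<eta> \<le> norm (snd z)}"
    obtain x y where zxy: "z = (x,y)" by (cases z)
    have "x \<in> K" "poly (ev x P) y = 0" "\<eta> \<le> norm y" using z zxy by (auto simp: F_def)
    thus "z \<in> {z \<in> {(x,y). x \<noteq> 0 \<and> y \<noteq> 0 \<and> poly (ev x P) y = 0}. fst z \<in> K}"
      using zxy K \<eta> by auto
  qed
  have c1: "compact (K \<times> cball (0::complex) M)" using K(2) by (intro compact_Times) auto
  have "continuous_on UNIV F" unfolding F_def by (rule cont_ev2)
  hence c2: "closed {z. F z = 0}" using continuous_closed_preimage_constant[of UNIV F 0] by simp
  have c3: "closed {z::complex\<times>complex. \<eta> \<le> norm (snd z)}"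
    by (intro closed_Collect_le continuous_intros)
  show ?thesis unfolding eqset
    by (intro compact_Int_closed c1 c2 c3)
qed

lemma core:
  fixes P :: "complex poly poly"
  assumes dP: "degree P > 0"
    and lcP: "\<And>x. x \<noteq> 0 \<Longrightarrow> poly (lead_coeff P) x \<noteq> 0"
    and c0P: "\<And>x. x \<noteq> 0 \<Longrightarrow> poly (coeff P 0) x \<noteq> 0"
  shows "branched_covering {(x,y). x \<noteq> 0 \<and> y \<noteq> 0 \<and> poly (ev x P) y = 0} fst (- {0})"
proof -
  define S where "S = {(x::complex,y::complex). x \<noteq> 0 \<and> y \<noteq> 0 \<and> poly (ev x P) y = 0}"
  have evP0: "ev x P \<noteq> 0" if "x \<noteq> 0" for x using lcP[OF that] lead_coeff_ev[OF lcP[OF that]] by auto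
  have nz: "y \<noteq> 0" if "x \<noteq> 0" "poly (ev x P) y = 0" for x y
  proof
    assume "y = 0"
    hence "poly (coeff P 0) x = 0" using that by (simp add: poly_0_coeff_0 coeff_ev)
    thus False using c0P[OF that(1)] by simp
  qed
  have img: "fst ` S = - {0}"
  proof
    show "fst ` S \<subseteq> - {0}" by (auto simp: S_def)
    show "- {0} \<subseteq> fst ` S"
    proof
      fix x :: complex assume "x \<in> - {0}"
      hence x: "x \<noteq> 0" by simp
      have "degree (ev x P) > 0" using degree_ev[OF lcP[OF x]] dP by simp
      then obtain y where y: "poly (ev x P) y = 0" using alg_closed_imp_poly_has_root by blast
      hence "(x,y) \<in> S" using nz[OF x y] x by (simp add: S_def)
      thus "x \<in> fst ` S" by force
    qed
  qed
  have fib: "finite {z \<in> S. fst z = t}" if "t \<in> - {0}" for t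
  proof -
    have t: "t \<noteq> 0" using that by simp
    have "{z \<in> S. fst z = t} \<subseteq> Pair t ` {y. poly (ev t P) y = 0}" by (auto simp: S_def)
    moreover have "finite (Pair t ` {y. poly (ev t P) y = 0})" using poly_roots_finite[OF evP0[OF t]] by simp
    ultimately show ?thesis by (rule finite_subset)
  qed
  obtain R where dR: "degree R > 0" and resR: "resultant R (pderiv R) \<noteq> 0"
    and rootsR: "\<And>x y. ev x P \<noteq> 0 \<Longrightarrow> poly (ev x P) y = 0 \<longleftrightarrow> poly (ev x R) y = 0"
    using radical[OF dP] by metis
  define h where "h = resultant R (pderiv R) * lead_coeff R * lead_coeff (pderiv R)"
  have pR: "pderiv R \<noteq> 0" using dR by (simp add: pderiv_eq_0_iff)
  have h0: "h \<noteq> 0" using resR dR pR by (auto simp: h_def)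
  define D where "D = {x. poly h x = 0} - {0}"
  have finD: "finite D" unfolding D_def using poly_roots_finite[OF h0] by simp
  define U where "U = - {0} - D"
  have "closed (insert 0 D)" using finD by (intro finite_imp_closed) simp
  hence "open (- insert 0 D)" by (rule open_Compl)
  moreover have "- insert 0 D = U" unfolding U_def by auto
  ultimately have U: "open U" by simp
  have hU: "poly h x \<noteq> 0" if "x \<in> U" for x using that by (auto simp: U_def D_def)
  have cov: "covering_space {z. fst z \<in> U \<and> poly (ev (fst z) R) (snd z) = 0} fst U"
  proof (rule covering_roots[OF U _ _ dR])
    fix x assume "x \<in> U"
    hence hx: "poly h x \<noteq> 0" by (rule hU)
    thus "poly (lead_coeff R) x \<noteq> 0" by (auto simp: h_def)
    show "card {y. poly (ev x R) y = 0} = degree R"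
      by (rule generic_card) (use hx in \<open>auto simp: h_def\<close>)
  qed
  have eqS: "S - fst -` D = {z. fst z \<in> U \<and> poly (ev (fst z) R) (snd z) = 0}"
  proof (intro equalityI subsetI)
    fix z assume z: "z \<in> S - fst -` D"
    obtain x y where zxy: "z = (x,y)" by (cases z)
    have x: "x \<noteq> 0" "x \<notin> D" "poly (ev x P) y = 0" using z zxy by (auto simp: S_def)
    thus "z \<in> {z. fst z \<in> U \<and> poly (ev (fst z) R) (snd z) = 0}"
      using rootsR[OF evP0[OF x(1)]] zxy by (auto simp: U_def)
  next
    fix z assume z: "z \<in> {z. fst z \<in> U \<and> poly (ev (fst z) R) (snd z) = 0}"
    obtain x y where zxy: "z = (x,y)" by (cases z)
    have x: "x \<noteq> 0" "x \<notin> D" "poly (ev x R) y = 0" using z zxy by (auto simp: U_def)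
    hence "poly (ev x P) y = 0" using rootsR[OF evP0[OF x(1)]] by simp
    thus "z \<in> S - fst -` D" using x zxy nz[OF x(1)] by (auto simp: S_def)
  qed
  have TD: "- {0} - D = U" by (simp add: U_def)
  show ?thesis unfolding S_def[symmetric] branched_covering_def
  proof (intro conjI allI impI ballI exI[of _ D])
    show "continuous_on S fst" by (intro continuous_intros)
    show "fst ` S = - {0}" by (rule img)
    show "compact {z \<in> S. fst z \<in> K}" if "K \<subseteq> - {0} \<and> compact K" for K
      unfolding S_def using proper_part[OF lcP c0P] that by blast
    show "finite {z \<in> S. fst z = t}" if "t \<in> - {0}" for t using fib[OF that] .
    show "D \<subseteq> - {0}" by (auto simp: D_def)
    show "D sparse_in - {0}" using finD by (rule finite_imp_sparse)
    show "covering_space (S - fst -` D) fst (- {0} - D)" unfolding eqS TD by (rule cov)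
  qed
qed



definition cf :: "nat \<Rightarrow> (nat \<Rightarrow> int) \<Rightarrow> (nat \<Rightarrow> int) \<Rightarrow> (nat \<Rightarrow> complex) \<Rightarrow> int \<times> int \<Rightarrow> complex" where
  "cf k m n r p = (if p \<in> {(0,0),(1,0),(0,1)} then 1 else 0) + (\<Sum>i\<in>{i\<in>{1..k}. (m i, n i) = p}. r i)"

definition mon :: "int \<Rightarrow> complex \<Rightarrow> complex \<Rightarrow> int \<times> int \<Rightarrow> complex" where
  "mon f x y p = x powi (fst p) * y powi (snd p - f * fst p)"

lemma finite_mirror: "finite (mirror_exponents k m n)"
  by (simp add: mirror_exponents_def)

lemma laurent:
  fixes x y :: complex
  assumes x: "x \<noteq> 0" and y: "y \<noteq> 0"
  shows "1 + x * y powi (-f) + y + (\<Sum>i=1..k. r i * (x * y powi (-f)) powi (m i) * y powi (n i)) =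
    (\<Sum>p\<in>mirror_exponents k m n. cf k m n r p * mon f x y p)"
proof -
  define M where "M = mirror_exponents k m n"
  define B where "B = {(0::int,0::int),(1,0),(0,1)}"
  define g where "g i = (m i, n i)" for i
  have finM: "finite M" unfolding M_def by (rule finite_mirror)
  have BM: "B \<subseteq> M" by (auto simp: B_def M_def mirror_exponents_def)
  have gM: "g ` {1..k} \<subseteq> M" by (auto simp: g_def M_def mirror_exponents_def)
  have trm: "r i * (x * y powi (-f)) powi (m i) * y powi (n i) = r i * mon f x y (g i)" for i
  proof -
    have "(x * y powi (-f)) powi (m i) * y powi (n i) = x powi m i * ((y powi (-f)) powi (m i) * y powi (n i))"
      by (simp add: power_int_mult_distrib mult_ac)
    also have "(y powi (-f)) powi (m i) = y powi (-f * m i)" by (rule power_int_mult[symmetric])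
    also have "y powi (-f * m i) * y powi (n i) = y powi (n i - f * m i)"
      using y by (simp add: power_int_add[symmetric])
    finally show ?thesis by (simp add: mon_def g_def mult_ac)
  qed
  have "(\<Sum>p\<in>M. cf k m n r p * mon f x y p) =
     (\<Sum>p\<in>M. (if p \<in> B then mon f x y p else 0)) + (\<Sum>p\<in>M. (\<Sum>i\<in>{i\<in>{1..k}. g i = p}. r i * mon f x y p))"
  proof -
    have "cf k m n r p * mon f x y p = (if p \<in> B then mon f x y p else 0) + (\<Sum>i\<in>{i\<in>{1..k}. g i = p}. r i * mon f x y p)" for p
      unfolding cf_def B_def[symmetric] g_def[symmetric] by (simp add: distrib_right sum_distrib_right)
    thus ?thesis by (simp add: sum.distrib)
  qed
  also have "(\<Sum>p\<in>M. (if p \<in> B then mon f x y p else 0)) = (\<Sum>p\<in>B. mon f x y p)"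
    using finM BM by (simp add: sum.If_cases Int_absorb1)
  also have "\<dots> = 1 + x * y powi (-f) + y" by (simp add: B_def mon_def)
  also have "(\<Sum>p\<in>M. (\<Sum>i\<in>{i\<in>{1..k}. g i = p}. r i * mon f x y p)) =
       (\<Sum>p\<in>M. (\<Sum>i\<in>{i\<in>{1..k}. g i = p}. r i * mon f x y (g i)))"
    by (intro sum.cong refl) auto
  also have "\<dots> = (\<Sum>i=1..k. r i * mon f x y (g i))"
    by (rule sum.group[OF _ finM gM]) simp
  also have "\<dots> = (\<Sum>i=1..k. r i * (x * y powi (-f)) powi (m i) * y powi (n i))"
    by (simp add: trm)
  finally show ?thesis by (simp add: M_def)
qed



lemma ev_monom: "ev x (monom a i) = monom (poly a x) i"
  by (rule poly_eqI) (simp add: coeff_ev coeff_monom)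

lemma poly_build:
  fixes A :: "(int \<times> int) set" and c :: "int \<times> int \<Rightarrow> complex" and e :: "int \<times> int \<Rightarrow> int"
  assumes finA: "finite A" and inj: "inj_on e A" and c0: "\<And>p. p \<in> A \<Longrightarrow> c p \<noteq> 0"
    and two: "p1 \<in> A" "p2 \<in> A" "e p1 \<noteq> e p2"
  shows "\<exists>P :: complex poly poly. degree P > 0 \<and> (\<forall>x. x \<noteq> 0 \<longrightarrow> poly (lead_coeff P) x \<noteq> 0) \<and>
     (\<forall>x. x \<noteq> 0 \<longrightarrow> poly (coeff P 0) x \<noteq> 0) \<and>
     (\<forall>x y. x \<noteq> 0 \<longrightarrow> y \<noteq> 0 \<longrightarrow>
        ((\<Sum>p\<in>A. c p * (x powi (fst p) * y powi (e p))) = 0 \<longleftrightarrow> poly (ev x P) y = 0))"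
proof -
  have Ane: "A \<noteq> {}" using two by auto
  define amin where "amin = Min (fst ` A)"
  define emin where "emin = Min (e ` A)"
  define emax where "emax = Max (e ` A)"
  have amin: "amin \<le> fst p" if "p \<in> A" for p using finA that by (simp add: amin_def)
  have emin: "emin \<le> e p" if "p \<in> A" for p using finA that by (simp add: emin_def)
  have emax: "e p \<le> emax" if "p \<in> A" for p using finA that by (simp add: emax_def)
  have "emin \<in> e ` A" unfolding emin_def using finA Ane by (intro Min_in) auto
  then obtain pmin where pmin: "pmin \<in> A" "e pmin = emin" by (metis imageE)
  have "emax \<in> e ` A" unfolding emax_def using finA Ane by (intro Max_in) auto
  then obtain pmax where pmax: "pmax \<in> A" "e pmax = emax" by (metis imageE)
  define idx where "idx p = nat (e p - emin)" for p :: "int \<times> int"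
  define xe where "xe p = nat (fst p - amin)" for p :: "int \<times> int"
  have idx_inj: "p = q" if "p \<in> A" "q \<in> A" "idx p = idx q" for p q
  proof -
    have "e p = e q" using that emin[OF that(1)] emin[OF that(2)] by (simp add: idx_def)
    thus ?thesis using inj that by (auto dest: inj_onD)
  qed
  define P :: "complex poly poly" where "P = (\<Sum>p\<in>A. monom (monom (c p) (xe p)) (idx p))"
  have coeffP: "coeff P j = (\<Sum>p\<in>A. if idx p = j then monom (c p) (xe p) else 0)" for j
    by (simp add: P_def coeff_sum coeff_monom)
  have coeff_at: "coeff P (idx q) = monom (c q) (xe q)" if q: "q \<in> A" for q
  proof -
    have "coeff P (idx q) = (\<Sum>p\<in>A. if p = q then monom (c p) (xe p) else 0)"
      unfolding coeffP using idx_inj q by (intro sum.cong refl) auto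
    also have "\<dots> = monom (c q) (xe q)" using finA q by simp
    finally show ?thesis .
  qed
  have coeff_above: "coeff P j = 0" if "j > idx pmax" for j
  proof -
    have "idx p \<noteq> j" if "p \<in> A" for p
      using emax[OF that] pmax \<open>j > idx pmax\<close> emin[OF that] by (auto simp: idx_def)
    thus ?thesis unfolding coeffP by (intro sum.neutral) auto
  qed
  have mnz: "poly (monom (c q) (xe q)) x \<noteq> 0" if "q \<in> A" "x \<noteq> 0" for q x
    using c0[OF that(1)] that(2) by (simp add: poly_monom)
  have cmax0: "coeff P (idx pmax) \<noteq> 0" using coeff_at[OF pmax(1)] c0[OF pmax(1)] by simp
  have degP: "degree P = idx pmax"
  proof (rule antisym)
    show "degree P \<le> idx pmax" by (rule degree_le) (use coeff_above in auto)
    show "idx pmax \<le> degree P" using cmax0 by (rule le_degree)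
  qed
  have "emin < emax" using two emin emax by (metis antisym_conv2 le_less_trans linorder_neqE_linordered_idom order.trans)
  hence dpos: "degree P > 0" using degP pmax by (simp add: idx_def)
  have lc: "poly (lead_coeff P) x \<noteq> 0" if "x \<noteq> 0" for x
    using degP coeff_at[OF pmax(1)] mnz[OF pmax(1) that] by simp
  have "idx pmin = 0" using pmin by (simp add: idx_def)
  hence c00: "poly (coeff P 0) x \<noteq> 0" if "x \<noteq> 0" for x
    using coeff_at[OF pmin(1)] mnz[OF pmin(1) that] by simp
  have evalP: "poly (ev x P) y = (\<Sum>p\<in>A. c p * x ^ xe p * y ^ idx p)" for x y
    by (simp add: P_def ev_def evh.hom_sum poly_sum ev_monom[unfolded ev_def] poly_monom mult_ac)
  have rel: "(\<Sum>p\<in>A. c p * (x powi (fst p) * y powi (e p))) = (x powi amin * y powi emin) * poly (ev x P) y"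
    if x: "x \<noteq> 0" and y: "y \<noteq> 0" for x y
  proof -
    have "c p * (x powi (fst p) * y powi (e p)) = (x powi amin * y powi emin) * (c p * x ^ xe p * y ^ idx p)"
      if p: "p \<in> A" for p
    proof -
      have "x powi (fst p) = x powi (int (xe p) + amin)" using amin[OF p] by (simp add: xe_def)
      also have "\<dots> = x ^ xe p * x powi amin" using x by (simp add: power_int_add)
      finally have 1: "x powi (fst p) = x ^ xe p * x powi amin" .
      have "y powi (e p) = y powi (int (idx p) + emin)" using emin[OF p] by (simp add: idx_def)
      also have "\<dots> = y ^ idx p * y powi emin" using y by (simp add: power_int_add)
      finally have 2: "y powi (e p) = y ^ idx p * y powi emin" .
      show ?thesis by (simp add: 1 2 mult_ac)
    qed
    hence "(\<Sum>p\<in>A. c p * (x powi (fst p) * y powi (e p))) = (\<Sum>p\<in>A. (x powi amin * y powi emin) * (c p * x ^ xe p * y ^ idx p))"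
      by (intro sum.cong) auto
    also have "\<dots> = (x powi amin * y powi emin) * poly (ev x P) y" by (simp add: evalP sum_distrib_left)
    finally show ?thesis .
  qed
  show ?thesis
  proof (intro exI[of _ P] conjI allI impI)
    show "degree P > 0" by (rule dpos)
    fix x :: complex assume x: "x \<noteq> 0"
    show "poly (lead_coeff P) x \<noteq> 0" by (rule lc[OF x])
    show "poly (coeff P 0) x \<noteq> 0" by (rule c00[OF x])
    fix y :: complex assume y: "y \<noteq> 0"
    have "x powi amin * y powi emin \<noteq> 0" using x y by simp
    thus "(\<Sum>p\<in>A. c p * (x powi (fst p) * y powi (e p))) = 0 \<longleftrightarrow> poly (ev x P) y = 0"
      using rel[OF x y] x y by simp
  qed
qed



theorem mainTheorem2:
  fixes k :: nat and m n :: "nat \<Rightarrow> int" and r :: "nat \<Rightarrow> complex"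
  assumes "toric_mirror_data k m n"
  shows "finite {f :: int. \<not> branched_covering (framed_curve k m n r f) fst (- {0})}"
proof -
  define M where "M = mirror_exponents k m n"
  have finM: "finite M" unfolding M_def by (rule finite_mirror)
  define Bad where "Bad = (\<lambda>(p,q). (snd p - snd q) div (fst p - fst q)) ` (M \<times> M)"
  have finBad: "finite Bad" unfolding Bad_def using finM by simp
  have notbase: "(m i, n i) \<notin> {(0,0),(1,0),(0,1)}" if "i \<in> {1..k}" for i
    using assms that unfolding toric_mirror_data_def by blast
  have good: "branched_covering (framed_curve k m n r f) fst (- {0})" if fB: "f \<notin> Bad" for f
  proof -
    define e where "e p = snd p - f * fst p" for p :: "int \<times> int"
    have inj: "inj_on e M"
    proof (rule inj_onI)
      fix p q assume p: "p \<in> M" and q: "q \<in> M" and epq: "e p = e q"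
      show "p = q"
      proof (cases "fst p = fst q")
        case True
        hence "snd p = snd q" using epq by (simp add: e_def)
        thus ?thesis using True by (simp add: prod_eq_iff)
      next
        case False
        have "snd p - snd q = f * (fst p - fst q)" using epq by (simp add: e_def algebra_simps)
        hence "(snd p - snd q) div (fst p - fst q) = f" using False by simp
        hence "f \<in> Bad" unfolding Bad_def using p q by force
        thus ?thesis using fB by simp
      qed
    qed
    define A where "A = {p \<in> M. cf k m n r p \<noteq> 0}"
    have cf1: "cf k m n r p = 1" if "p \<in> {(0,0),(1,0),(0,1)}" for p
    proof -
      have emp: "{i\<in>{1..k}. (m i, n i) = p} = {}" using notbase that by blast
      show ?thesis using that unfolding cf_def emp by simp
    qed
    have a1: "(0,0) \<in> A" "(0,1) \<in> A" using cf1 by (auto simp: A_def M_def mirror_exponents_def)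
    have finA: "finite A" using finM by (simp add: A_def)
    have injA: "inj_on e A" using inj by (rule inj_on_subset) (auto simp: A_def)
    have ex: "\<exists>P :: complex poly poly. degree P > 0 \<and> (\<forall>x. x \<noteq> 0 \<longrightarrow> poly (lead_coeff P) x \<noteq> 0) \<and>
     (\<forall>x. x \<noteq> 0 \<longrightarrow> poly (coeff P 0) x \<noteq> 0) \<and>
     (\<forall>x y. x \<noteq> 0 \<longrightarrow> y \<noteq> 0 \<longrightarrow>
        ((\<Sum>p\<in>A. cf k m n r p * (x powi (fst p) * y powi (e p))) = 0 \<longleftrightarrow> poly (ev x P) y = 0))"
      by (rule poly_build[OF finA injA _ a1(1) a1(2)]) (auto simp: A_def e_def)
    then obtain P :: "complex poly poly" where dP: "degree P > 0"
      and lcP: "\<forall>x. x \<noteq> 0 \<longrightarrow> poly (lead_coeff P) x \<noteq> 0"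
      and c0P: "\<forall>x. x \<noteq> 0 \<longrightarrow> poly (coeff P 0) x \<noteq> 0"
      and eqv: "\<forall>x y. x \<noteq> 0 \<longrightarrow> y \<noteq> 0 \<longrightarrow>
        ((\<Sum>p\<in>A. cf k m n r p * (x powi (fst p) * y powi (e p))) = 0 \<longleftrightarrow> poly (ev x P) y = 0)"
      by blast
    have fc: "framed_curve k m n r f = {(x,y). x \<noteq> 0 \<and> y \<noteq> 0 \<and> poly (ev x P) y = 0}"
    proof -
      have "(1 + x * y powi (-f) + y + (\<Sum>i=1..k. r i * (x * y powi (-f)) powi (m i) * y powi (n i)) = 0)
            \<longleftrightarrow> poly (ev x P) y = 0" if x: "x \<noteq> 0" and y: "y \<noteq> 0" for x y
      proof -
        have "1 + x * y powi (-f) + y + (\<Sum>i=1..k. r i * (x * y powi (-f)) powi (m i) * y powi (n i)) =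
            (\<Sum>p\<in>M. cf k m n r p * mon f x y p)" unfolding M_def by (rule laurent[OF x y])
        also have "\<dots> = (\<Sum>p\<in>A. cf k m n r p * mon f x y p)"
          unfolding A_def using finM by (intro sum.mono_neutral_right) auto
        also have "\<dots> = (\<Sum>p\<in>A. cf k m n r p * (x powi (fst p) * y powi (e p)))"
          by (simp add: mon_def e_def)
        finally show ?thesis using eqv x y by simp
      qed
      thus ?thesis unfolding framed_curve_def by auto
    qed
    show ?thesis unfolding fc by (rule core[OF dP]) (use lcP c0P in auto)
  qed
  have "{f :: int. \<not> branched_covering (framed_curve k m n r f) fst (- {0})} \<subseteq> Bad"
    using good by blast
  thus ?thesis using finBad by (rule finite_subset)
qed


end
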